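(* Let $K=\mathbf R$ or $\mathbf C$, let $V$ be an $n$-dimensional $K$-vector space with nondegenerate symmetric bilinear forms $b_0,b_1$, and let $f=(b_0^\dagger)^{-1}b_1^\dagger$ have a single Jordan block, with eigenvalue $\lambda$. Let $\mathbf e$ be a basis of $V$ and $\varepsilon\in\mathfrak c$ with $[f]_{\mathbf e}=J_n(\lambda)$ and $[b_0]_{\mathbf e}=\varepsilon C_n$. Let $\mathbf v$ be a basis of $V$ and $\eta\in\mathfrak c$ such that, in the dual basis $\mathbf v^*$ of $V^*$, $[b_1^*]_{\mathbf v^*}=\eta C_n$ and $[b_0^*]_{\mathbf v^*}=\eta C_nJ_n(\lambda)$. Let $\Phi$ be the matrix with $\mathbf e=\mathbf v\Phi$. Then: (1) if $K=\mathbf R$, $\varepsilon\eta\lambda>0$; (2) up to sign, $$\Phi=\sqrt{\varepsilon\eta\lambda}\sum_{\ell=0}^{n}a_\ell\lambda^{-\ell}C_nN^\ell,$$ where $\sum_\ell a_\ell t^\ell$ is the Taylor series of $(1+t)^{1/2}$, i.e. $a_\ell=\prod_{j=0}^{\ell-1}(1/2-j)/\ell!$, and $\sqrt{\varepsilon\eta\lambda}$ is a square root of $\varepsilon\eta\lambda$.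
   Context: $\mathfrak c=\{\pm1\}$ if $K=\mathbf R$ and $\mathfrak c=\{1\}$ if $K=\mathbf C$. $b_i^\dagger\colon V\to V^*$, $b_i^\dagger(x)(y)=b_i(x,y)$. The forms $b_i^*$ on $V^*$ are defined by $(b_i^* )^\dagger=(b_i^\dagger)^{-1}$. $C_n=(\delta_{n+1,i+j})$ is the antidiagonal matrix, $N=(\delta_{i+1,j})$ the regular nilpotent matrix, and $J_n(\lambda)=\lambda\mathrm{Id}+N$. *)

theory Defs
  imports "Jordan_Normal_Form.Jordan_Normal_Form"
begin

text \<open>Coordinates: V = K^n with its standard basis, V^* with the standard dual basis.
 A bilinear form b is represented by its Gram matrix B (b(x,y) = x^T B y); the matrix of
 b^dagger : V -> V^* is then B^T (= B for symmetric b), and the form b^* on V^* with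
 (b^*)^dagger = (b^dagger)^{-1} has Gram matrix B^{-1}.  A basis of V is an invertible
 matrix whose columns are the basis vectors.  Indices are 0-based.\<close>

definition antidiag_mat :: "nat \<Rightarrow> 'a::{zero,one} mat" where
  "antidiag_mat n = mat n n (\<lambda>(i,j). if i + j = n - 1 then 1 else 0)"

definition nilp_mat :: "nat \<Rightarrow> 'a::{zero,one} mat" where
  "nilp_mat n = mat n n (\<lambda>(i,j). if Suc i = j then 1 else 0)"

definition sqrt_coeff :: "nat \<Rightarrow> 'a::field_char_0" where
  "sqrt_coeff l = (\<Prod>j<l. (1/2 - of_nat j)) / fact l"

definition phi_sum :: "nat \<Rightarrow> 'a::field_char_0 \<Rightarrow> 'a mat" where
  "phi_sum n lam = mat n n (\<lambda>(i,j). \<Sum>l=0..n.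
      sqrt_coeff l * inverse lam ^ l * (antidiag_mat n * nilp_mat n ^\<^sub>m l) $$ (i,j))"

text \<open>B0, B1: Gram matrices of b0, b1 (symmetric, nondegenerate, with inverses B0i, B1i);
  F: matrix of f = (b0^dagger)^{-1} b1^dagger;
  E: basis e, with [f]_e = J_n(lam) and [b0]_e = eps C_n;
  P: basis v (inverse Q, whose rows are the dual basis v^*), with
     [b1^*]_{v^*} = eta C_n and [b0^*]_{v^*} = eta C_n J_n(lam);
  Phi: the matrix with e = v Phi.\<close>
definition A10_hyps ::
  "nat \<Rightarrow> 'a::field mat \<Rightarrow> 'a mat \<Rightarrow> 'a mat \<Rightarrow> 'a mat \<Rightarrow> 'a mat \<Rightarrow> 'a mat \<Rightarrow> 'a mat
     \<Rightarrow> 'a mat \<Rightarrow> 'a \<Rightarrow> 'a \<Rightarrow> 'a \<Rightarrow> bool" where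
  "A10_hyps n B0 B1 B0i B1i E P Q Phi eps eta lam \<longleftrightarrow>
     0 < n \<and>
     B0 \<in> carrier_mat n n \<and> B1 \<in> carrier_mat n n \<and>
     B0i \<in> carrier_mat n n \<and> B1i \<in> carrier_mat n n \<and>
     E \<in> carrier_mat n n \<and> P \<in> carrier_mat n n \<and> Q \<in> carrier_mat n n \<and>
     Phi \<in> carrier_mat n n \<and>
     transpose_mat B0 = B0 \<and> transpose_mat B1 = B1 \<and>
     B0 * B0i = 1\<^sub>m n \<and> B0i * B0 = 1\<^sub>m n \<and> B1 * B1i = 1\<^sub>m n \<and> B1i * B1 = 1\<^sub>m n \<and>
     invertible_mat E \<and> P * Q = 1\<^sub>m n \<and> Q * P = 1\<^sub>m n \<and>
     E * jordan_block n lam = (B0i * B1) * E \<and>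
     transpose_mat E * B0 * E = eps \<cdot>\<^sub>m antidiag_mat n \<and>
     Q * B1i * transpose_mat Q = eta \<cdot>\<^sub>m antidiag_mat n \<and>
     Q * B0i * transpose_mat Q = eta \<cdot>\<^sub>m (antidiag_mat n * jordan_block n lam) \<and>
     E = P * Phi"

end

theory Submission imports Defs "HOL-Computational_Algebra.Formal_Power_Series" begin

lemma sqrt_coeff_gchoose: "sqrt_coeff l = ((1/2::'a::field_char_0) gchoose l)"
  by (simp add: sqrt_coeff_def gbinomial_prod_rev atLeast0LessThan)

lemma sqrt_coeff_conv: "(\<Sum>k=0..m. sqrt_coeff k * sqrt_coeff (m-k) :: 'a::field_char_0)
   = (if m = 0 then 1 else if m = 1 then 1 else 0)"
proof -
  have "(\<Sum>k=0..m. sqrt_coeff k * sqrt_coeff (m-k) :: 'a) = (1/2 + 1/2) gchoose m"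
    unfolding sqrt_coeff_gchoose by (rule gbinomial_Vandermonde)
  also have "\<dots> = of_nat 1 gchoose m" by simp
  also have "\<dots> = of_nat (1 choose m)" by (simp only: binomial_gbinomial)
  finally show ?thesis by (cases m) auto
qed

lemma uniq_sqrt:
  fixes g t :: "nat \<Rightarrow> 'a::field_char_0"
  assumes "\<And>m. m < n \<Longrightarrow> (\<Sum>k=0..m. g k * g (m-k)) = (\<Sum>k=0..m. t k * t (m-k))"
    and "g 0 = t 0" and "g 0 \<noteq> 0"
  shows "m < n \<Longrightarrow> g m = t m"
proof (induction m rule: less_induct)
  case (less m)
  show ?case
  proof (cases m)
    case 0 then show ?thesis using assms by simp
  next
    case (Suc p)
    have split: "(\<Sum>k=0..m. f k * f (m-k)) = 2 * f 0 * f m + (\<Sum>k\<in>{1..<m}. f k * f (m-k))"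
      for f :: "nat \<Rightarrow> 'a"
    proof -
      have "{0..m} = insert 0 (insert m {1..<m})" using Suc by auto
      then show ?thesis using Suc by (simp add: algebra_simps)
    qed
    have "(\<Sum>k\<in>{1..<m}. g k * g (m-k)) = (\<Sum>k\<in>{1..<m}. t k * t (m-k))"
      using less by (intro sum.cong) auto
    with assms(1)[OF less(2)] split[of g] split[of t] assms(2,3)
    show ?thesis by simp
  qed
qed

lemma mult_entry:
  assumes "A \<in> carrier_mat n m" "B \<in> carrier_mat m p" "i < n" "j < p"
  shows "(A * B) $$ (i,j) = (\<Sum>k<m. A $$ (i,k) * B $$ (k,j))"
  using assms by (simp add: scalar_prod_def lessThan_atLeast0)

lemma C_carrier[simp]: "antidiag_mat n \<in> carrier_mat n n"
  by (simp add: antidiag_mat_def)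

lemma C_dims[simp]: "dim_row (antidiag_mat n) = n" "dim_col (antidiag_mat n) = n"
  by (simp_all add: antidiag_mat_def)

lemma C_entry[simp]: "i < n \<Longrightarrow> j < n \<Longrightarrow> antidiag_mat n $$ (i,j) = (if i + j = n - 1 then 1 else 0)"
  by (simp add: antidiag_mat_def)

lemma N_carrier[simp]: "nilp_mat n \<in> carrier_mat n n"
  by (simp add: nilp_mat_def)

lemma N_entry[simp]: "i < n \<Longrightarrow> j < n \<Longrightarrow> nilp_mat n $$ (i,j) = (if Suc i = j then 1 else 0)"
  by (simp add: nilp_mat_def)

lemma C_mult_entry:
  fixes A :: "'a::comm_ring_1 mat"
  assumes "A \<in> carrier_mat n p" "i < n" "j < p"
  shows "(antidiag_mat n * A) $$ (i,j) = A $$ (n - 1 - i, j)"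
proof -
  have "(antidiag_mat n * A) $$ (i,j) = (\<Sum>k<n. antidiag_mat n $$ (i,k) * A $$ (k,j))"
    using assms by (intro mult_entry[of _ n n _ p]) auto
  also have "\<dots> = (\<Sum>k<n. (if k = n - 1 - i then A $$ (k,j) else 0))"
    using assms by (intro sum.cong) auto
  also have "\<dots> = A $$ (n - 1 - i, j)" using assms by (simp add: sum.delta)
  finally show ?thesis .
qed

lemma mult_C_entry:
  fixes A :: "'a::comm_ring_1 mat"
  assumes "A \<in> carrier_mat p n" "i < p" "j < n"
  shows "(A * antidiag_mat n) $$ (i,j) = A $$ (i, n - 1 - j)"
proof -
  have "(A * antidiag_mat n) $$ (i,j) = (\<Sum>k<n. A $$ (i,k) * antidiag_mat n $$ (k,j))"
    using assms by (intro mult_entry[of _ p n _ n]) auto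
  also have "\<dots> = (\<Sum>k<n. (if k = n - 1 - j then A $$ (i,k) else 0))"
    using assms by (intro sum.cong) auto
  also have "\<dots> = A $$ (i, n - 1 - j)" using assms by (simp add: sum.delta)
  finally show ?thesis .
qed

lemma CC: "antidiag_mat n * antidiag_mat n = (1\<^sub>m n :: 'a::comm_ring_1 mat)"
  by (rule eq_matI) (auto simp del: index_mult_mat(1) simp add: mult_C_entry[OF C_carrier])

lemma C_transpose: "transpose_mat (antidiag_mat n) = (antidiag_mat n :: 'a::comm_ring_1 mat)"
  by (rule eq_matI) (auto simp: antidiag_mat_def)

lemma N_pow_entry:
  assumes "i < n" "j < n"
  shows "(nilp_mat n ^\<^sub>m l :: 'a::comm_ring_1 mat) $$ (i,j) = (if j = i + l then 1 else 0)"
  using assms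
proof (induction l arbitrary: j)
  case 0 then show ?case by (simp add: nilp_mat_def)
next
  case (Suc l)
  have c: "nilp_mat n ^\<^sub>m l \<in> carrier_mat n n" by (simp add: nilp_mat_def)
  have "(nilp_mat n ^\<^sub>m Suc l :: 'a mat) $$ (i,j) = (\<Sum>k<n. (if k = i + l \<and> Suc k = j then 1 else 0))"
    using Suc.prems Suc.IH by (simp only: pow_mat.simps, subst mult_entry[OF c N_carrier]) (auto intro!: sum.cong)
  also have "\<dots> = (if j = i + Suc l then 1 else 0)"
    using Suc.prems by (auto simp: sum.delta' cong: conj_cong) 
  finally show ?case .
qed

lemma toeplitz:
  fixes G :: "'a::comm_ring_1 mat"
  assumes G: "G \<in> carrier_mat n n" and comm: "G * nilp_mat n = nilp_mat n * G"
  shows "i < n \<Longrightarrow> j < n \<Longrightarrow> G $$ (i,j) = (if i \<le> j then G $$ (0, j - i) else 0)"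
proof (induction i arbitrary: j)
  case 0 then show ?case by simp
next
  case (Suc i)
  have e1: "(G * nilp_mat n) $$ (i,j) = (if j \<ge> 1 then G $$ (i, j - 1) else 0)"
  proof -
    have "(G * nilp_mat n) $$ (i,j) = (\<Sum>k<n. G $$ (i,k) * nilp_mat n $$ (k,j))"
      using Suc.prems G by (intro mult_entry[OF G N_carrier]) auto
    also have "\<dots> = (\<Sum>k<n. if k = j - 1 \<and> j \<ge> 1 then G $$ (i,k) else 0)"
      using Suc.prems G by (intro sum.cong) auto
    finally show ?thesis using Suc.prems by (auto simp: sum.delta)
  qed
  have e2: "(nilp_mat n * G) $$ (i,j) = G $$ (Suc i, j)"
  proof -
    have "(nilp_mat n * G) $$ (i,j) = (\<Sum>k<n. nilp_mat n $$ (i,k) * G $$ (k,j))"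
      using Suc.prems G by (intro mult_entry[OF N_carrier G]) auto
    also have "\<dots> = (\<Sum>k<n. if k = Suc i then G $$ (k,j) else 0)"
      using Suc.prems G by (intro sum.cong) auto
    finally show ?thesis using Suc.prems by (auto simp: sum.delta)
  qed
  have "G $$ (Suc i, j) = (if j \<ge> 1 then G $$ (i, j - 1) else 0)" using e1 e2 comm by simp
  then show ?case using Suc.IH[of "j - 1"] Suc.prems by (auto simp: Suc_le_eq)
qed

lemma phi_sum_entry:
  assumes "i < n" "j < n"
  shows "(phi_sum n lam :: 'a::field_char_0 mat) $$ (i,j) =
     (if n - 1 - i \<le> j then sqrt_coeff (j - (n-1-i)) * inverse lam ^ (j - (n-1-i)) else 0)"
proof -
  have c: "nilp_mat n ^\<^sub>m l \<in> carrier_mat n n" for l by (simp add: nilp_mat_def)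
  have "(phi_sum n lam :: 'a mat) $$ (i,j) = (\<Sum>l=0..n. if l = j - (n-1-i) \<and> n - 1 - i \<le> j then
       sqrt_coeff l * inverse lam ^ l else 0)"
    using assms by (auto simp: phi_sum_def C_mult_entry[OF c] N_pow_entry intro!: sum.cong)
  also have "\<dots> = (if n - 1 - i \<le> j then sqrt_coeff (j - (n-1-i)) * inverse lam ^ (j - (n-1-i)) else 0)"
    using assms by (auto simp: sum.delta')
  finally show ?thesis .
qed

lemma smult_smult_mat': "a \<cdot>\<^sub>m (b \<cdot>\<^sub>m A) = (a * b :: 'a::comm_ring_1) \<cdot>\<^sub>m A"
  by (rule eq_matI) auto

lemma transpose_smult': "transpose_mat (a \<cdot>\<^sub>m A) = (a :: 'a::comm_ring_1) \<cdot>\<^sub>m transpose_mat A"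
  by (rule eq_matI) auto

lemma one_smult_mat': "1 \<cdot>\<^sub>m A = (A :: 'a::comm_ring_1 mat)"
  by (rule eq_matI) auto

lemma multc: "A \<in> carrier_mat n n \<Longrightarrow> B \<in> carrier_mat n n \<Longrightarrow> A * B \<in> carrier_mat n n"
  by auto

lemma assoc_n: "A \<in> carrier_mat n n \<Longrightarrow> B \<in> carrier_mat n n \<Longrightarrow> C \<in> carrier_mat n n \<Longrightarrow>
  A * B * C = A * (B * (C :: 'a::comm_ring_1 mat))"
  by (rule assoc_mult_mat)

lemma smult_l_n: "A \<in> carrier_mat n n \<Longrightarrow> B \<in> carrier_mat n n \<Longrightarrow>
  (k \<cdot>\<^sub>m A) * B = k \<cdot>\<^sub>m (A * (B :: 'a::comm_ring_1 mat))"
  by (rule mult_smult_assoc_mat)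

lemma smult_r_n: "A \<in> carrier_mat n n \<Longrightarrow> B \<in> carrier_mat n n \<Longrightarrow>
  A * (k \<cdot>\<^sub>m B) = k \<cdot>\<^sub>m (A * (B :: 'a::comm_ring_1 mat))"
  by (rule mult_smult_distrib)

lemma smultc: "A \<in> carrier_mat n n \<Longrightarrow> k \<cdot>\<^sub>m A \<in> carrier_mat n n"
  by auto

lemma transc: "A \<in> carrier_mat n n \<Longrightarrow> transpose_mat A \<in> carrier_mat n n"
  by auto

lemma cancel_left:
  fixes A :: "'a::comm_ring_1 mat"
  assumes "A \<in> carrier_mat n n" "B \<in> carrier_mat n n" "X \<in> carrier_mat n n" "A * B = 1\<^sub>m n"
  shows "A * (B * X) = X"
proof -
  have "A * (B * X) = (A * B) * X" using assms by (intro assoc_mult_mat[symmetric]) auto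
  then show ?thesis using assms by simp
qed

lemma main:
  fixes B0 :: "'a::field_char_0 mat"
  assumes H: "A10_hyps n B0 B1 B0i B1i E P Q Phi eps eta lam"
    and e1: "eps * eps = 1" and e2: "eta * eta = 1"
  shows "lam \<noteq> 0 \<and> (Phi $$ (n-1,0))^2 = eps * eta * lam \<and> Phi = Phi $$ (n-1,0) \<cdot>\<^sub>m phi_sum n lam"
proof -
  define C :: "'a mat" where "C = antidiag_mat n"
  define J :: "'a mat" where "J = jordan_block n lam"
  define N :: "'a mat" where "N = nilp_mat n"
  define mu where "mu = eps * eta"
  have mu2: "mu * mu = 1" 
  proof -
    have "mu * mu = (eps * eps) * (eta * eta)" by (simp add: mu_def algebra_simps)
    then show ?thesis using e1 e2 by simp
  qed
  note h = H[unfolded A10_hyps_def, folded C_def J_def]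
  note n0 = h[THEN conjunct1]
  note cB0 = h[THEN conjunct2, THEN conjunct1]
  note cB1 = h[THEN conjunct2, THEN conjunct2, THEN conjunct1]
  note cB0i = h[THEN conjunct2, THEN conjunct2, THEN conjunct2, THEN conjunct1]
  note cB1i = h[THEN conjunct2, THEN conjunct2, THEN conjunct2, THEN conjunct2, THEN conjunct1]
  note cE = h[THEN conjunct2, THEN conjunct2, THEN conjunct2, THEN conjunct2, THEN conjunct2, THEN conjunct1]
  note cP = h[THEN conjunct2, THEN conjunct2, THEN conjunct2, THEN conjunct2, THEN conjunct2, THEN conjunct2, THEN conjunct1]
  note cQ = h[THEN conjunct2, THEN conjunct2, THEN conjunct2, THEN conjunct2, THEN conjunct2, THEN conjunct2, THEN conjunct2, THEN conjunct1]
  note cPhi = h[THEN conjunct2, THEN conjunct2, THEN conjunct2, THEN conjunct2, THEN conjunct2, THEN conjunct2, THEN conjunct2, THEN conjunct2, THEN conjunct1]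
  note B0T = h[THEN conjunct2, THEN conjunct2, THEN conjunct2, THEN conjunct2, THEN conjunct2, THEN conjunct2, THEN conjunct2, THEN conjunct2, THEN conjunct2, THEN conjunct1]
  note B1T = h[THEN conjunct2, THEN conjunct2, THEN conjunct2, THEN conjunct2, THEN conjunct2, THEN conjunct2, THEN conjunct2, THEN conjunct2, THEN conjunct2, THEN conjunct2, THEN conjunct1]
  note i0 = h[THEN conjunct2, THEN conjunct2, THEN conjunct2, THEN conjunct2, THEN conjunct2, THEN conjunct2, THEN conjunct2, THEN conjunct2, THEN conjunct2, THEN conjunct2, THEN conjunct2, THEN conjunct1]
  note i0' = h[THEN conjunct2, THEN conjunct2, THEN conjunct2, THEN conjunct2, THEN conjunct2, THEN conjunct2, THEN conjunct2, THEN conjunct2, THEN conjunct2, THEN conjunct2, THEN conjunct2, THEN conjunct2, THEN conjunct1]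
  note i1 = h[THEN conjunct2, THEN conjunct2, THEN conjunct2, THEN conjunct2, THEN conjunct2, THEN conjunct2, THEN conjunct2, THEN conjunct2, THEN conjunct2, THEN conjunct2, THEN conjunct2, THEN conjunct2, THEN conjunct2, THEN conjunct1]
  note i1' = h[THEN conjunct2, THEN conjunct2, THEN conjunct2, THEN conjunct2, THEN conjunct2, THEN conjunct2, THEN conjunct2, THEN conjunct2, THEN conjunct2, THEN conjunct2, THEN conjunct2, THEN conjunct2, THEN conjunct2, THEN conjunct2, THEN conjunct1]
  note invE = h[THEN conjunct2, THEN conjunct2, THEN conjunct2, THEN conjunct2, THEN conjunct2, THEN conjunct2, THEN conjunct2, THEN conjunct2, THEN conjunct2, THEN conjunct2, THEN conjunct2, THEN conjunct2, THEN conjunct2, THEN conjunct2, THEN conjunct2, THEN conjunct1]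
  note PQ = h[THEN conjunct2, THEN conjunct2, THEN conjunct2, THEN conjunct2, THEN conjunct2, THEN conjunct2, THEN conjunct2, THEN conjunct2, THEN conjunct2, THEN conjunct2, THEN conjunct2, THEN conjunct2, THEN conjunct2, THEN conjunct2, THEN conjunct2, THEN conjunct2, THEN conjunct1]
  note QP = h[THEN conjunct2, THEN conjunct2, THEN conjunct2, THEN conjunct2, THEN conjunct2, THEN conjunct2, THEN conjunct2, THEN conjunct2, THEN conjunct2, THEN conjunct2, THEN conjunct2, THEN conjunct2, THEN conjunct2, THEN conjunct2, THEN conjunct2, THEN conjunct2, THEN conjunct2, THEN conjunct1]
  note EJ = h[THEN conjunct2, THEN conjunct2, THEN conjunct2, THEN conjunct2, THEN conjunct2, THEN conjunct2, THEN conjunct2, THEN conjunct2, THEN conjunct2, THEN conjunct2, THEN conjunct2, THEN conjunct2, THEN conjunct2, THEN conjunct2, THEN conjunct2, THEN conjunct2, THEN conjunct2, THEN conjunct2, THEN conjunct1]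
  note Eb0 = h[THEN conjunct2, THEN conjunct2, THEN conjunct2, THEN conjunct2, THEN conjunct2, THEN conjunct2, THEN conjunct2, THEN conjunct2, THEN conjunct2, THEN conjunct2, THEN conjunct2, THEN conjunct2, THEN conjunct2, THEN conjunct2, THEN conjunct2, THEN conjunct2, THEN conjunct2, THEN conjunct2, THEN conjunct2, THEN conjunct1]
  note Qb1 = h[THEN conjunct2, THEN conjunct2, THEN conjunct2, THEN conjunct2, THEN conjunct2, THEN conjunct2, THEN conjunct2, THEN conjunct2, THEN conjunct2, THEN conjunct2, THEN conjunct2, THEN conjunct2, THEN conjunct2, THEN conjunct2, THEN conjunct2, THEN conjunct2, THEN conjunct2, THEN conjunct2, THEN conjunct2, THEN conjunct2, THEN conjunct1]
  note Qb0 = h[THEN conjunct2, THEN conjunct2, THEN conjunct2, THEN conjunct2, THEN conjunct2, THEN conjunct2, THEN conjunct2, THEN conjunct2, THEN conjunct2, THEN conjunct2, THEN conjunct2, THEN conjunct2, THEN conjunct2, THEN conjunct2, THEN conjunct2, THEN conjunct2, THEN conjunct2, THEN conjunct2, THEN conjunct2, THEN conjunct2, THEN conjunct2, THEN conjunct1]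
  note EP = h[THEN conjunct2, THEN conjunct2, THEN conjunct2, THEN conjunct2, THEN conjunct2, THEN conjunct2, THEN conjunct2, THEN conjunct2, THEN conjunct2, THEN conjunct2, THEN conjunct2, THEN conjunct2, THEN conjunct2, THEN conjunct2, THEN conjunct2, THEN conjunct2, THEN conjunct2, THEN conjunct2, THEN conjunct2, THEN conjunct2, THEN conjunct2, THEN conjunct2]
  have cC: "C \<in> carrier_mat n n" and cJ: "J \<in> carrier_mat n n" and cN: "N \<in> carrier_mat n n"
    by (auto simp: C_def J_def N_def)
  have CC': "C * C = 1\<^sub>m n" by (simp add: C_def CC)
  have CT: "transpose_mat C = C" by (simp add: C_def C_transpose)
  obtain Ei where Ei1: "E * Ei = 1\<^sub>m n" and Ei2: "Ei * E = 1\<^sub>m n" and cEi: "Ei \<in> carrier_mat n n"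
  proof -
    from invE obtain B where a0: "E * B = 1\<^sub>m (dim_row E)" and b0: "B * E = 1\<^sub>m (dim_row B)"
      unfolding invertible_mat_def inverts_mat_def by blast
    have a: "E * B = 1\<^sub>m n" using a0 cE by simp
    have rB: "dim_row B = n" using arg_cong[OF b0, of dim_col] cE by simp
    have cB: "dim_col B = n" using arg_cong[OF a, of dim_col] by simp
    have b: "B * E = 1\<^sub>m n" using b0 rB by simp
    show ?thesis by (rule that[of B]) (use a b rB cB in \<open>auto intro: carrier_matI\<close>)
  qed
  note cars = cB0 cB1 cB0i cB1i cE cP cQ cPhi cC cJ cN cEi
  have PhiQE: "Phi = Q * E"
    using cars QP unfolding EP by (simp add: cancel_left)
  define Pi where "Pi = Ei * P"
  have cPi: "Pi \<in> carrier_mat n n" using cars by (simp add: Pi_def)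
  have msa: "\<And>A B D. A \<in> carrier_mat n n \<Longrightarrow> B \<in> carrier_mat n n \<Longrightarrow> D \<in> carrier_mat n n \<Longrightarrow>
      A * B * D = A * (B * (D :: 'a mat))"
    "\<And>A B. A \<in> carrier_mat n n \<Longrightarrow> B \<in> carrier_mat n n \<Longrightarrow> (A :: 'a mat) * B \<in> carrier_mat n n"
    "\<And>A B k. A \<in> carrier_mat n n \<Longrightarrow> B \<in> carrier_mat n n \<Longrightarrow> (k \<cdot>\<^sub>m A) * B = k \<cdot>\<^sub>m (A * (B :: 'a mat))"
    "\<And>A B k. A \<in> carrier_mat n n \<Longrightarrow> B \<in> carrier_mat n n \<Longrightarrow> A * (k \<cdot>\<^sub>m B) = k \<cdot>\<^sub>m (A * (B :: 'a mat))"
    "\<And>A k. A \<in> carrier_mat n n \<Longrightarrow> k \<cdot>\<^sub>m (A :: 'a mat) \<in> carrier_mat n n"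
    "\<And>A. A \<in> carrier_mat n n \<Longrightarrow> transpose_mat (A :: 'a mat) \<in> carrier_mat n n"
    by (auto intro: assoc_n smult_l_n smult_r_n)
  note ms = msa smult_smult_mat' one_smult_mat'
  have PhiPi: "Phi * Pi = 1\<^sub>m n"
    using cars by (simp del: assoc_mult_mat add: ms PhiQE Pi_def cancel_left[OF cE cEi cP Ei1] QP)
  have PiPhi: "Pi * Phi = 1\<^sub>m n"
    using cars by (simp del: assoc_mult_mat add: ms PhiQE Pi_def cancel_left[OF cP cQ cE PQ] Ei2)
  have ETB0: "transpose_mat E * B0 = eps \<cdot>\<^sub>m (C * Ei)"
  proof -
    have "transpose_mat E * B0 = (transpose_mat E * B0 * E) * Ei" using cars by (simp del: assoc_mult_mat add: ms Ei1)
    also have "\<dots> = (eps \<cdot>\<^sub>m C) * Ei" by (simp only: Eb0)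
    also have "\<dots> = eps \<cdot>\<^sub>m (C * Ei)" by (rule mult_smult_assoc_mat[OF cC cEi])
    finally show ?thesis .
  qed
  define X where "X = eps \<cdot>\<^sub>m (E * (C * transpose_mat E))"
  have cX: "X \<in> carrier_mat n n" using cars by (simp del: assoc_mult_mat add: X_def ms)
  have XB0: "X * B0 = 1\<^sub>m n"
  proof -
    have "X * B0 = eps \<cdot>\<^sub>m (E * (C * (transpose_mat E * B0)))" using cars by (simp del: assoc_mult_mat add: X_def ms)
    also have "\<dots> = (eps * eps) \<cdot>\<^sub>m (E * (C * (C * Ei)))" using cars by (simp del: assoc_mult_mat add: ETB0 ms)
    also have "\<dots> = 1\<^sub>m n" using cars e1 by (simp del: assoc_mult_mat add: cancel_left[OF cC cC cEi CC'] Ei1 ms)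
    finally show ?thesis .
  qed
  have B0iX: "B0i = X"
  proof -
    have "B0i = (X * B0) * B0i" using XB0 cars by simp
    also have "\<dots> = X" using cars cX by (simp del: assoc_mult_mat add: ms i0)
    finally show ?thesis .
  qed
  have s5: "Phi * (C * transpose_mat Phi) = mu \<cdot>\<^sub>m (C * J)"
  proof -
    have "eps \<cdot>\<^sub>m (Phi * (C * transpose_mat Phi)) = Q * B0i * transpose_mat Q"
      using cars by (simp del: assoc_mult_mat add: B0iX X_def PhiQE transpose_mult[OF cQ cE] ms)
    also have "\<dots> = eta \<cdot>\<^sub>m (C * J)" by (rule Qb0)
    finally have "eps \<cdot>\<^sub>m (eps \<cdot>\<^sub>m (Phi * (C * transpose_mat Phi))) = eps \<cdot>\<^sub>m (eta \<cdot>\<^sub>m (C * J))" by simp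
    then show ?thesis using e1 cars by (simp del: assoc_mult_mat add: ms mu_def)
  qed
  have clC: "\<And>X. X \<in> carrier_mat n n \<Longrightarrow> C * (C * X) = X" by (rule cancel_left[OF cC cC _ CC'])
  have s6: "C * (Phi * (C * transpose_mat Phi)) = mu \<cdot>\<^sub>m J"
    using cars by (simp del: assoc_mult_mat add: s5 ms clC)
  have Eb0n: "transpose_mat E * (B0 * E) = eps \<cdot>\<^sub>m C" using Eb0 cars by (simp del: assoc_mult_mat add: ms)
  have EJn: "B0i * (B1 * E) = E * J" using EJ cars by (simp del: assoc_mult_mat add: ms)
  have cl0: "\<And>X. X \<in> carrier_mat n n \<Longrightarrow> B0 * (B0i * X) = X" by (rule cancel_left[OF cB0 cB0i _ i0])
  have s7: "transpose_mat E * (B1 * E) = eps \<cdot>\<^sub>m (C * J)"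
  proof -
    have "transpose_mat E * (B1 * E) = transpose_mat E * (B0 * (B0i * (B1 * E)))"
      using cars by (simp del: assoc_mult_mat add: ms cl0)
    also have "\<dots> = transpose_mat E * (B0 * (E * J))" by (simp only: EJn)
    also have "\<dots> = (transpose_mat E * (B0 * E)) * J" using cars by (simp del: assoc_mult_mat add: ms)
    also have "\<dots> = eps \<cdot>\<^sub>m (C * J)" using cars by (simp del: assoc_mult_mat add: ms Eb0n)
    finally show ?thesis .
  qed
  have PEPi: "P = E * Pi" using cars by (simp del: assoc_mult_mat add: ms Pi_def cancel_left[OF cE cEi cP Ei1])
  have s8: "transpose_mat P * (B1 * E) = eps \<cdot>\<^sub>m (transpose_mat Pi * (C * J))"
  proof -
    have "transpose_mat P = transpose_mat Pi * transpose_mat E" unfolding PEPi by (rule transpose_mult[OF cE cPi])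
    then show ?thesis using cars cPi by (simp del: assoc_mult_mat add: ms s7)
  qed
  have QTPT: "transpose_mat Q * transpose_mat P = 1\<^sub>m n"
    using transpose_mult[OF cP cQ] PQ by simp
  have s9: "Phi = mu \<cdot>\<^sub>m (C * (transpose_mat Pi * (C * J)))"
  proof -
    have qq: "transpose_mat Q * (transpose_mat P * (B1 * E)) = B1 * E"
      by (rule cancel_left[OF transc[OF cQ] transc[OF cP] _ QTPT]) (use cars in simp)
    have "Phi = (Q * B1i * transpose_mat Q) * (transpose_mat P * (B1 * E))"
      using cars qq by (simp del: assoc_mult_mat add: ms cancel_left[OF transc[OF cQ] transc[OF cP] _ QTPT]
          cancel_left[OF cB1i cB1 _ i1'] PhiQE)
    also have "\<dots> = (eta \<cdot>\<^sub>m C) * (eps \<cdot>\<^sub>m (transpose_mat Pi * (C * J)))" by (simp only: Qb1 s8)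
    also have "\<dots> = mu \<cdot>\<^sub>m (C * (transpose_mat Pi * (C * J)))"
      using cars cPi by (simp del: assoc_mult_mat add: ms mu_def mult.commute)
    finally show ?thesis .
  qed
  have PTPiT: "transpose_mat Phi * transpose_mat Pi = 1\<^sub>m n"
    using transpose_mult[OF cPi cPhi] PiPhi by simp
  have s10: "C * (transpose_mat Phi * (C * Phi)) = mu \<cdot>\<^sub>m J"
  proof -
    have "C * (transpose_mat Phi * (C * Phi)) = C * (transpose_mat Phi * (C * (mu \<cdot>\<^sub>m (C * (transpose_mat Pi * (C * J))))))"
      by (subst (2) s9) (rule refl)
    also have "\<dots> = mu \<cdot>\<^sub>m J"
      using cars cPi by (simp del: assoc_mult_mat add: ms clC cancel_left[OF transc[OF cPhi] transc[OF cPi] _ PTPiT])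
    finally show ?thesis .
  qed
  define G where "G = C * Phi"
  define Hm where "Hm = C * transpose_mat Phi"
  have cG: "G \<in> carrier_mat n n" and cH: "Hm \<in> carrier_mat n n" using cars by (auto simp: G_def Hm_def)
  have GH: "G * Hm = mu \<cdot>\<^sub>m J" using s6 cars by (simp del: assoc_mult_mat add: G_def Hm_def ms)
  have HG: "Hm * G = mu \<cdot>\<^sub>m J" using s10 cars by (simp del: assoc_mult_mat add: G_def Hm_def ms)
  have mu0: "mu \<noteq> 0" using mu2 by auto
  have GJ: "G * J = J * G"
  proof -
    have "mu \<cdot>\<^sub>m (G * J) = G * (mu \<cdot>\<^sub>m J)" using cG cJ by (simp del: assoc_mult_mat add: ms)
    also have "\<dots> = G * (Hm * G)" by (simp only: HG)
    also have "\<dots> = (G * Hm) * G" using cG cH by (simp del: assoc_mult_mat add: ms)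
    also have "\<dots> = (mu \<cdot>\<^sub>m J) * G" by (simp only: GH)
    also have "\<dots> = mu \<cdot>\<^sub>m (J * G)" using cG cJ by (simp del: assoc_mult_mat add: ms)
    finally have "mu \<cdot>\<^sub>m (mu \<cdot>\<^sub>m (G * J)) = mu \<cdot>\<^sub>m (mu \<cdot>\<^sub>m (J * G))" by simp
    then show ?thesis using mu2 by (simp add: smult_smult_mat' one_smult_mat')
  qed
  have Jent: "\<And>k j. k < n \<Longrightarrow> j < n \<Longrightarrow> J $$ (k,j) = (if k = j then lam else 0) + N $$ (k,j)"
    by (simp add: J_def N_def)
  have GN: "G * N = N * G"
  proof (rule eq_matI)
    fix i j assume ij: "i < dim_row (N * G)" "j < dim_col (N * G)"
    then have i: "i < n" and j: "j < n" using cN cG by auto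
    have "(G * J) $$ (i,j) = (\<Sum>k<n. G $$ (i,k) * J $$ (k,j))" by (rule mult_entry[OF cG cJ i j])
    also have "\<dots> = (\<Sum>k<n. (if k = j then lam * G $$ (i,k) else 0) + G $$ (i,k) * N $$ (k,j))"
      using j by (intro sum.cong) (auto simp: Jent algebra_simps)
    also have "\<dots> = lam * G $$ (i,j) + (G * N) $$ (i,j)"
      using j by (simp add: sum.distrib mult_entry[OF cG cN i j])
    finally have 1: "(G * J) $$ (i,j) = lam * G $$ (i,j) + (G * N) $$ (i,j)" .
    have "(J * G) $$ (i,j) = (\<Sum>k<n. J $$ (i,k) * G $$ (k,j))" by (rule mult_entry[OF cJ cG i j])
    also have "\<dots> = (\<Sum>k<n. (if k = i then lam * G $$ (k,j) else 0) + N $$ (i,k) * G $$ (k,j))"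
      using i by (intro sum.cong) (auto simp: Jent algebra_simps)
    also have "\<dots> = lam * G $$ (i,j) + (N * G) $$ (i,j)"
      using i by (simp add: sum.distrib mult_entry[OF cN cG i j])
    finally have 2: "(J * G) $$ (i,j) = lam * G $$ (i,j) + (N * G) $$ (i,j)" .
    show "(G * N) $$ (i,j) = (N * G) $$ (i,j)" using 1 2 GJ by simp
  qed (use cG cN in auto)
  define g where "g k = G $$ (0,k)" for k
  have Gt: "\<And>i j. i < n \<Longrightarrow> j < n \<Longrightarrow> G $$ (i,j) = (if i \<le> j then g (j - i) else 0)"
    unfolding g_def by (rule toeplitz[OF cG GN[unfolded N_def]])
  have PhiCG: "Phi = C * G" using cars by (simp del: assoc_mult_mat add: G_def clC)
  have Phient: "\<And>i j. i < n \<Longrightarrow> j < n \<Longrightarrow> Phi $$ (i,j) = G $$ (n - 1 - i, j)"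
    unfolding PhiCG C_def by (rule C_mult_entry[OF cG[unfolded]])
  have HGeq: "Hm = G"
  proof (rule eq_matI)
    fix i j assume ij: "i < dim_row G" "j < dim_col G"
    then have i: "i < n" and j: "j < n" using cG by auto
    have "Hm $$ (i,j) = Phi $$ (j, n - 1 - i)"
      unfolding Hm_def C_def using i j cars by (subst C_mult_entry[of _ n n]) auto
    also have "\<dots> = G $$ (n - 1 - j, n - 1 - i)" using i j by (simp add: Phient)
    also have "\<dots> = G $$ (i,j)" using i j by (simp add: Gt) linarith
    finally show "Hm $$ (i,j) = G $$ (i,j)" .
  qed (use cG cH in auto)
  have GG: "G * G = mu \<cdot>\<^sub>m J" using GH HGeq by simp
  have conv: "\<And>m. m < n \<Longrightarrow> (\<Sum>k=0..m. g k * g (m-k)) = mu * (if m = 0 then lam else if m = 1 then 1 else 0)"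
  proof -
    fix m assume m: "m < n"
    have "(G * G) $$ (0,m) = (\<Sum>k<n. G $$ (0,k) * G $$ (k,m))" using m n0 by (intro mult_entry[OF cG cG]) auto
    also have "\<dots> = (\<Sum>k<n. if k \<le> m then g k * g (m-k) else 0)"
      using m n0 by (intro sum.cong) (auto simp: Gt)
    also have "\<dots> = (\<Sum>k\<in>{k\<in>{..<n}. k \<le> m}. g k * g (m-k))" by (rule sum.inter_filter[symmetric]) simp
    also have "{k\<in>{..<n}. k \<le> m} = {0..m}" using m by auto
    finally have "(G * G) $$ (0,m) = (\<Sum>k=0..m. g k * g (m-k))" .
    moreover have "(G * G) $$ (0,m) = mu * (if m = 0 then lam else if m = 1 then 1 else 0)"
      using m n0 by (simp add: GG J_def)
    ultimately show "(\<Sum>k=0..m. g k * g (m-k)) = mu * (if m = 0 then lam else if m = 1 then 1 else 0)" by simp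
  qed
  have g0: "g 0 * g 0 = mu * lam" using conv[of 0] n0 by simp
  have lam0: "lam \<noteq> 0"
  proof
    assume "lam = 0"
    then have "g 0 = 0" using g0 by simp
    then have col: "\<And>k. k < n \<Longrightarrow> G $$ (k,0) = 0" using Gt by auto
    define Y where "Y = Pi * C"
    have cY: "Y \<in> carrier_mat n n" using cPi cC by (simp add: Y_def)
    have "Y * G = 1\<^sub>m n" using cars cPi by (simp del: assoc_mult_mat add: Y_def G_def ms clC PiPhi)
    then have "(Y * G) $$ (0,0) = 1" using n0 by simp
    moreover have "(Y * G) $$ (0,0) = 0" using mult_entry[OF cY cG n0 n0] col by simp
    ultimately show False by simp
  qed
  define sc where "sc = g 0"
  have sc_eq: "Phi $$ (n-1, 0) = sc" using Phient[of "n-1" 0] n0 by (simp add: sc_def g_def)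
  have sc0: "sc \<noteq> 0" using g0 lam0 mu0 by (auto simp: sc_def)
  define t where "t m = sc * sqrt_coeff m * inverse lam ^ m" for m
  have tconv: "(\<Sum>k=0..m. t k * t (m-k)) = mu * (if m = 0 then lam else if m = 1 then 1 else 0)" for m
  proof -
    have "(\<Sum>k=0..m. t k * t (m-k)) = (\<Sum>k=0..m. (sc * sc * inverse lam ^ m) * (sqrt_coeff k * sqrt_coeff (m-k)))"
    proof (rule sum.cong)
      fix k assume "k \<in> {0..m}"
      then have "inverse lam ^ m = inverse lam ^ k * inverse lam ^ (m-k)" by (simp add: power_add[symmetric])
      then show "t k * t (m-k) = (sc * sc * inverse lam ^ m) * (sqrt_coeff k * sqrt_coeff (m-k))"
        by (simp add: t_def algebra_simps)
    qed simp
    also have "\<dots> = sc * sc * inverse lam ^ m * (if m = 0 then 1 else if m = 1 then 1 else 0)"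
      by (simp add: sum_distrib_left[symmetric] sqrt_coeff_conv)
    also have "\<dots> = mu * (if m = 0 then lam else if m = 1 then 1 else 0)"
      using g0 lam0 by (auto simp: sc_def field_simps)
    finally show ?thesis .
  qed
  have gt: "m < n \<Longrightarrow> g m = t m" for m
    by (rule uniq_sqrt[of n g t]) (use conv tconv sc0 in \<open>auto simp: t_def sc_def sqrt_coeff_def\<close>)
  show ?thesis
  proof (intro conjI)
    show "lam \<noteq> 0" by (rule lam0)
    show "(Phi $$ (n-1,0))^2 = eps * eta * lam" unfolding sc_eq using g0 by (simp add: power2_eq_square sc_def mu_def)
    show "Phi = Phi $$ (n-1,0) \<cdot>\<^sub>m phi_sum n lam"
      unfolding sc_eq
    proof (rule eq_matI)
      fix i j assume ij: "i < dim_row (sc \<cdot>\<^sub>m phi_sum n lam)" "j < dim_col (sc \<cdot>\<^sub>m phi_sum n lam)"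
      then have i: "i < n" and j: "j < n" by (auto simp: phi_sum_def)
      have pd: "dim_row (phi_sum n lam) = n" "dim_col (phi_sum n lam) = n" by (simp_all add: phi_sum_def)
      have "Phi $$ (i,j) = (if n - 1 - i \<le> j then g (j - (n-1-i)) else 0)"
        using i j by (simp add: Phient Gt)
      also have "\<dots> = (if n - 1 - i \<le> j then t (j - (n-1-i)) else 0)"
        using j by (auto intro: gt)
      also have "\<dots> = (sc \<cdot>\<^sub>m phi_sum n lam) $$ (i,j)"
        using i j by (simp add: phi_sum_entry t_def pd)
      finally show "Phi $$ (i,j) = (sc \<cdot>\<^sub>m phi_sum n lam) $$ (i,j)" .
    qed (use cPhi in \<open>auto simp: phi_sum_def\<close>)
  qed
qed

theorem lemmaA10:
  shows
  "(\<forall>n (B0::real mat) B1 B0i B1i E P Q Phi eps eta lam.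
      A10_hyps n B0 B1 B0i B1i E P Q Phi eps eta lam \<longrightarrow> eps \<in> {1, -1} \<longrightarrow> eta \<in> {1, -1} \<longrightarrow>
      eps * eta * lam > 0 \<and>
      (\<exists>s. s ^ 2 = eps * eta * lam \<and> Phi = s \<cdot>\<^sub>m phi_sum n lam))
   \<and>
   (\<forall>n (B0::complex mat) B1 B0i B1i E P Q Phi eps eta lam.
      A10_hyps n B0 B1 B0i B1i E P Q Phi eps eta lam \<longrightarrow> eps = 1 \<longrightarrow> eta = 1 \<longrightarrow>
      (\<exists>s. s ^ 2 = eps * eta * lam \<and> Phi = s \<cdot>\<^sub>m phi_sum n lam))"
proof (intro conjI allI impI)
  fix n and B0 :: "real mat" and B1 B0i B1i E P Q Phi eps eta lam
  assume H: "A10_hyps n B0 B1 B0i B1i E P Q Phi eps eta lam" and ep: "eps \<in> {1, -1}" and et: "eta \<in> {1, -1}"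
  have e1: "eps * eps = 1" and e2: "eta * eta = 1" using ep et by auto
  note M = main[OF H e1 e2]
  let ?s = "Phi $$ (n-1,0)"
  have "eps * eta * lam \<noteq> 0" using M ep et by auto
  then have "?s \<noteq> 0" using M by auto
  then have pos: "?s ^ 2 > 0" by simp
  have sq: "?s ^ 2 = eps * eta * lam" using M by blast
  show "eps * eta * lam > 0" using pos sq by linarith
  show "\<exists>s. s ^ 2 = eps * eta * lam \<and> Phi = s \<cdot>\<^sub>m phi_sum n lam" using M by blast
next
  fix n and B0 :: "complex mat" and B1 B0i B1i E P Q Phi eps eta lam
  assume H: "A10_hyps n B0 B1 B0i B1i E P Q Phi eps eta lam" and "eps = 1" "eta = 1"
  then have e1: "eps * eps = 1" and e2: "eta * eta = 1" by auto
  note M = main[OF H e1 e2]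
  show "\<exists>s. s ^ 2 = eps * eta * lam \<and> Phi = s \<cdot>\<^sub>m phi_sum n lam" using M by blast
qed

end
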